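(* Let $M\in\frac12\mathbb N$, $\varepsilon\in\{0,1\}$, $\tau\in\mathbb H$, and fix $z\in\mathbb C$. Then, as a function of $u$, $F_{M,\varepsilon}(z,u)$ satisfies, for all $\lambda,\mu\in\mathbb Z$, \[F_{M,\varepsilon}(z,u+\lambda\tau+\mu)=(-1)^{2M\mu+\lambda\varepsilon}e^{-2\pi iM(\lambda^2\tau+2\lambda u)}F_{M,\varepsilon}(z,u).\] Moreover, $u\mapsto F_{M,\varepsilon}(z,u)$ is meromorphic on $\mathbb C$, its only poles are simple poles located in $z+\mathbb Z\tau+\mathbb Z$, and its residue at $u=z$ equals $\frac{1}{2\pi i}$.
   Context: Notation: $e(x):=e^{2\pi ix}$, $q:=e(\tau)$. For $M\in\frac12\mathbb N$ and $\varepsilon\in\{0,1\}$, \[F_{M,\varepsilon}(z,u):=e\bigl(M(z-u)\bigr)\sum_{n\in\mathbb Z}\frac{(-1)^{n\varepsilon}e(-2Mnu)\,q^{Mn(n+1)}}{1-q^n e(z-u)}.\] *)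

theory Defs
  imports "HOL-Analysis.Analysis"
begin

definition ee :: "complex \<Rightarrow> complex" where
  "ee x = exp (2 * of_real pi * \<i> * x)"

text \<open>F_{M,eps}(z,u) with q = e(tau), q^k written as e(k tau).
  The sum over n in Z is the (absolutely convergent) infinite sum infsum over UNIV::int.\<close>
definition F :: "real \<Rightarrow> int \<Rightarrow> complex \<Rightarrow> complex \<Rightarrow> complex \<Rightarrow> complex" where
  "F M \<epsilon> \<tau> z u =
     ee (of_real M * (z - u)) *
     (\<Sum>\<^sub>\<infinity>n::int. (-1) powi (n * \<epsilon>) * ee (- 2 * of_real M * of_int n * u)
          * ee (of_real M * of_int (n * (n + 1)) * \<tau>)
          / (1 - ee (of_int n * \<tau>) * ee (z - u)))"

definition lattice_coset :: "complex \<Rightarrow> complex \<Rightarrow> complex set" where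
  "lattice_coset \<tau> z = {z + of_int a * \<tau> + of_int b | a b. True}"

definition at_most_simple_pole :: "(complex \<Rightarrow> complex) \<Rightarrow> complex \<Rightarrow> bool" where
  "at_most_simple_pole f w \<longleftrightarrow> (\<exists>c. ((\<lambda>u. (u - w) * f u) \<longlongrightarrow> c) (at w))"

definition simple_pole_residue :: "(complex \<Rightarrow> complex) \<Rightarrow> complex \<Rightarrow> complex \<Rightarrow> bool" where
  "simple_pole_residue f w r \<longleftrightarrow> ((\<lambda>u. (u - w) * f u) \<longlongrightarrow> r) (at w)"

end

theory Submission imports Defs "HOL-Complex_Analysis.Complex_Analysis" begin

lemma ee_add: "ee (a + b) = ee a * ee b"
  by (simp add: ee_def distrib_left exp_add)

lemma norm_ee: "norm (ee w) = exp (-2*pi*Im w)"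
  by (simp add: ee_def norm_exp_eq_Re)

lemma ee_int: "ee (of_int k) = 1"
proof -
  have "ee (of_int k) = exp ((2 * of_int k * pi) * \<i>)" by (simp add: ee_def mult_ac)
  also have "\<dots> = 1" by (rule exp_integer_2pi) simp
  finally show ?thesis .
qed

lemma exp_pi_int: "exp (of_real pi * \<i> * of_int k) = (-1) powi k"
proof (cases "k \<ge> 0")
  case True
  then obtain n where k: "k = int n" by (metis nonneg_eq_int)
  have "exp (of_real pi * \<i> * of_int k) = exp (of_nat n * (of_real pi * \<i>))"
    by (simp add: k mult_ac)
  also have "\<dots> = exp (of_real pi * \<i>) ^ n" by (rule exp_of_nat_mult)
  also have "\<dots> = (-1) powi k" by (simp add: k)
  finally show ?thesis .
next
  case False
  then obtain n where k: "k = - int n" by (metis linorder_not_le neg_int_cases less_imp_le nonneg_eq_int minus_minus neg_0_le_iff_le)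
  have "exp (of_real pi * \<i> * of_int k) = inverse (exp (of_nat n * (of_real pi * \<i>)))"
    by (simp add: k mult_ac exp_minus)
  also have "\<dots> = inverse (exp (of_real pi * \<i>) ^ n)" by (simp only: exp_of_nat_mult)
  also have "\<dots> = (-1) powi k" by (simp add: k power_int_minus)
  finally show ?thesis .
qed

lemma ee_half: "ee (of_int k / 2) = (-1) powi k"
  using exp_pi_int[of k] by (simp add: ee_def mult_ac)

lemma exp_eq_1_iff_int: "exp (2 * of_real pi * \<i> * w) = 1 \<longleftrightarrow> (\<exists>b::int. w = of_int b)"
proof
  assume "exp (2 * of_real pi * \<i> * w) = 1"
  then obtain n :: int where "Re (2 * of_real pi * \<i> * w) = 0" "Im (2 * of_real pi * \<i> * w) = of_int (2*n) * pi"
    by (auto simp: exp_eq_1)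
  then have "Im w = 0" "Re w = of_int n" by auto
  then have "w = of_int n" by (simp add: complex_eq_iff)
  then show "\<exists>b::int. w = of_int b" by blast
next
  assume "\<exists>b::int. w = of_int b"
  then show "exp (2 * of_real pi * \<i> * w) = 1" using ee_int by (auto simp: ee_def)
qed

lemma ee_combine: "ee a * ee b = ee (a + b)" by (simp add: ee_add)

lemma ee_eq_shift: "a = b + of_int k \<Longrightarrow> ee a = ee b"
  by (simp add: ee_add ee_int)

definition gt :: "real \<Rightarrow> int \<Rightarrow> complex \<Rightarrow> complex \<Rightarrow> int \<Rightarrow> complex \<Rightarrow> complex" where
  "gt M \<epsilon> \<tau> z n u = (-1) powi (n * \<epsilon>) * ee (- 2 * of_real M * of_int n * u)
          * ee (of_real M * of_int (n * (n + 1)) * \<tau>)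
          / (1 - ee (of_int n * \<tau>) * ee (z - u))"

lemma F_gt: "F M \<epsilon> \<tau> z u = ee (of_real M * (z - u)) * (\<Sum>\<^sub>\<infinity>n. gt M \<epsilon> \<tau> z n u)"
  by (simp add: F_def gt_def)

lemma gt_shift:
  assumes M: "M = real m / 2"
  shows "gt M \<epsilon> \<tau> z (j + l) (u + of_int l * \<tau> + of_int k) =
     ((-1) powi (l * \<epsilon>) * ee (- 2 * of_real M * of_int l * u + of_real M * of_int (l - l^2) * \<tau>))
     * gt M \<epsilon> \<tau> z j u"
proof -
  have Mc: "of_real M = (of_nat m / 2 :: complex)" by (simp add: M)
  have den: "ee (of_int (j + l) * \<tau>) * ee (z - (u + of_int l * \<tau> + of_int k)) = ee (of_int j * \<tau>) * ee (z - u)"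
    unfolding ee_combine by (rule ee_eq_shift[where k = "-k"]) (simp add: algebra_simps)
  have num: "ee (- 2 * of_real M * of_int (j + l) * (u + of_int l * \<tau> + of_int k)) * ee (of_real M * of_int ((j + l) * (j + l + 1)) * \<tau>)
     = ee (- 2 * of_real M * of_int l * u + of_real M * of_int (l - l^2) * \<tau>) * (ee (- 2 * of_real M * of_int j * u) * ee (of_real M * of_int (j * (j + 1)) * \<tau>))"
    unfolding ee_combine by (rule ee_eq_shift[where k = "- int m * (j + l) * k"]) (simp add: Mc algebra_simps power2_eq_square)
  have sg: "(-1::complex) powi ((j + l) * \<epsilon>) = (-1) powi (l * \<epsilon>) * (-1) powi (j * \<epsilon>)"
  proof -
    have "(-1::complex) powi ((j + l) * \<epsilon>) = (-1) powi (j * \<epsilon> + l * \<epsilon>)" by (simp add: distrib_right)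
    also have "\<dots> = (-1) powi (j * \<epsilon>) * (-1) powi (l * \<epsilon>)" by (rule power_int_add) simp
    finally show ?thesis by (simp add: mult.commute)
  qed
  show ?thesis unfolding gt_def den sg
    using num by (simp add: mult_ac)
qed

lemma F_quasi:
  assumes M: "M = real m / 2"
  shows "F M \<epsilon> \<tau> z (u + of_int l * \<tau> + of_int k) =
              (-1) powi (int m * k + l * \<epsilon>)
              * exp (- 2 * of_real pi * \<i> * of_real M * (of_int l ^ 2 * \<tau> + 2 * of_int l * u))
              * F M \<epsilon> \<tau> z u"
proof -
  define c where "c = (-1) powi (l * \<epsilon>) * ee (- 2 * of_real M * of_int l * u + of_real M * of_int (l - l^2) * \<tau>)"
  have Mc: "of_real M = (of_nat m / 2 :: complex)" by (simp add: M)
  have bij: "bij_betw (\<lambda>j::int. j + l) UNIV UNIV"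
    by (rule bij_betwI[where g = "\<lambda>j. j - l"]) auto
  have "(\<Sum>\<^sub>\<infinity>n. gt M \<epsilon> \<tau> z n (u + of_int l * \<tau> + of_int k))
      = (\<Sum>\<^sub>\<infinity>j. gt M \<epsilon> \<tau> z (j + l) (u + of_int l * \<tau> + of_int k))"
    using infsum_reindex_bij_betw[OF bij, of "\<lambda>n. gt M \<epsilon> \<tau> z n (u + of_int l * \<tau> + of_int k)"] by simp
  also have "\<dots> = (\<Sum>\<^sub>\<infinity>j. c * gt M \<epsilon> \<tau> z j u)"
    by (simp add: gt_shift[OF M] c_def)
  also have "\<dots> = c * (\<Sum>\<^sub>\<infinity>j. gt M \<epsilon> \<tau> z j u)" by (rule infsum_cmult_right')
  finally have S: "(\<Sum>\<^sub>\<infinity>n. gt M \<epsilon> \<tau> z n (u + of_int l * \<tau> + of_int k)) = c * (\<Sum>\<^sub>\<infinity>j. gt M \<epsilon> \<tau> z j u)" .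
  have E: "ee (of_real M * (z - (u + of_int l * \<tau> + of_int k))) =
      ee (of_int (- (int m * k)) / 2) * ee (- of_real M * of_int l * \<tau>) * ee (of_real M * (z - u))"
    unfolding ee_combine by (rule ee_eq_shift[where k = 0]) (simp add: Mc algebra_simps)
  have E2: "ee (of_int (- (int m * k)) / 2) = (-1) powi (int m * k)"
    by (simp add: ee_half power_int_minus_one_minus del: of_int_minus)
  have E3: "ee (- of_real M * of_int l * \<tau>) * ee (- 2 * of_real M * of_int l * u + of_real M * of_int (l - l^2) * \<tau>)
     = exp (- 2 * of_real pi * \<i> * of_real M * (of_int l ^ 2 * \<tau> + 2 * of_int l * u))"
    unfolding ee_combine unfolding ee_def by (intro arg_cong[where f=exp]) (simp add: power2_eq_square algebra_simps)
  have sg: "(-1::complex) powi (int m * k + l * \<epsilon>) = (-1) powi (int m * k) * (-1) powi (l * \<epsilon>)"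
    by (simp add: power_int_add)
  show ?thesis unfolding F_gt S E E2 sg c_def using E3
    by (simp add: mult_ac)
qed

lemma den_zero_iff: "1 - ee (of_int n * \<tau>) * ee (z - u) = 0 \<longleftrightarrow> (\<exists>b::int. u = z + of_int n * \<tau> + of_int b)"
proof -
  have "1 - ee (of_int n * \<tau>) * ee (z - u) = 0 \<longleftrightarrow> exp (2 * of_real pi * \<i> * (of_int n * \<tau> + (z - u))) = 1"
    unfolding ee_combine by (simp add: ee_def)
  also have "\<dots> \<longleftrightarrow> (\<exists>b::int. of_int n * \<tau> + (z - u) = of_int b)" by (rule exp_eq_1_iff_int)
  also have "\<dots> \<longleftrightarrow> (\<exists>b::int. u = z + of_int n * \<tau> + of_int b)"
  proof
    assume "\<exists>b::int. of_int n * \<tau> + (z - u) = of_int b"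
    then obtain b :: int where "of_int n * \<tau> + (z - u) = of_int b" by blast
    then have "u = z + of_int n * \<tau> + of_int (-b)" by (simp add: algebra_simps)
    then show "\<exists>b::int. u = z + of_int n * \<tau> + of_int b" by blast
  next
    assume "\<exists>b::int. u = z + of_int n * \<tau> + of_int b"
    then obtain b :: int where "u = z + of_int n * \<tau> + of_int b" by blast
    then have "of_int n * \<tau> + (z - u) = of_int (-b)" by (simp add: algebra_simps)
    then show "\<exists>b::int. of_int n * \<tau> + (z - u) = of_int b" by blast
  qed
  finally show ?thesis .
qed

lemma norm_gt: "norm (gt M \<epsilon> \<tau> z n u) = exp (4*pi*M* of_int n * Im u) * exp (-2*pi*M* of_int (n*(n+1)) * Im \<tau>)
   / norm (1 - ee (of_int n * \<tau>) * ee (z - u))"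
  by (simp add: gt_def norm_divide norm_mult norm_power_int norm_ee mult.assoc)

lemma norm_w: "norm (ee (of_int n * \<tau>) * ee (z - u)) = exp (-2*pi*(of_int n * Im \<tau> + Im z - Im u))"
  by (simp add: norm_mult norm_ee exp_add[symmetric] algebra_simps)

lemma exp_m1_half: "exp (-1::real) \<le> 1/2"
proof -
  have "2 \<le> exp (1::real)" using exp_ge_add_one_self[of 1] by simp
  then show ?thesis by (simp add: exp_minus field_simps)
qed

lemma bound_pos:
  assumes t: "Im \<tau> > 0" and M: "M \<ge> 1/2" and Y: "\<bar>Im u\<bar> \<le> Y" "\<bar>Im z - Im u\<bar> \<le> Y"
    and n: "real n * Im \<tau> \<ge> 2*Y + 1"
  shows "norm (gt M \<epsilon> \<tau> z (int n) u) \<le> 2 * exp (- real n)"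
    and "1 - ee (of_int (int n) * \<tau>) * ee (z - u) \<noteq> 0"
proof -
  have Y0: "Y \<ge> 0" using Y by linarith
  have "norm (ee (of_int (int n) * \<tau>) * ee (z - u)) = exp (-2*pi*(real n * Im \<tau> + Im z - Im u))"
    using norm_w[of "int n"] by simp
  also have "\<dots> \<le> exp (-1)"
  proof -
    have "real n * Im \<tau> + Im z - Im u \<ge> 1" using n Y by linarith
    then have "2*pi*(real n * Im \<tau> + Im z - Im u) \<ge> 2*pi*1" by (intro mult_left_mono) auto
    moreover have "2*pi \<ge> (1::real)" using pi_gt3 by linarith
    ultimately have "2*pi*(real n * Im \<tau> + Im z - Im u) \<ge> 1" by linarith
    then show ?thesis by simp
  qed
  also have "\<dots> \<le> 1/2" by (rule exp_m1_half)
  finally have w: "norm (ee (of_int (int n) * \<tau>) * ee (z - u)) \<le> 1/2" .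
  have d: "norm (1 - ee (of_int (int n) * \<tau>) * ee (z - u)) \<ge> 1/2"
    using norm_triangle_ineq2[of 1 "ee (of_int (int n) * \<tau>) * ee (z - u)"] w by simp
  then show "1 - ee (of_int (int n) * \<tau>) * ee (z - u) \<noteq> 0" by auto
  define A where "A = 2*pi*M*real n"
  have A0: "A \<ge> real n"
  proof -
    have "3 * (1/2) \<le> pi * M" by (rule mult_mono) (use M pi_gt3 in auto)
    then have "2*pi*M \<ge> 1" by linarith
    then show ?thesis unfolding A_def using mult_right_mono[of 1 "2*pi*M" "real n"] by simp
  qed
  have "4*pi*M*real n * Im u + (-2*pi*M*(real n*(real n+1)) * Im \<tau>) = A * (2 * Im u - (real n + 1) * Im \<tau>)"
    by (simp add: A_def algebra_simps)
  also have "\<dots> \<le> A * (-1)"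
  proof (rule mult_left_mono)
    show "2 * Im u - (real n + 1) * Im \<tau> \<le> -1" using Y n t by (simp add: algebra_simps)
    show "A \<ge> 0" using A0 by linarith
  qed
  also have "\<dots> \<le> - real n" using A0 by simp
  finally have ex: "exp (4*pi*M*real n * Im u) * exp (-2*pi*M*(real n*(real n+1)) * Im \<tau>) \<le> exp (- real n)"
    by (simp add: exp_add[symmetric])
  have "norm (gt M \<epsilon> \<tau> z (int n) u) = exp (4*pi*M*real n * Im u) * exp (-2*pi*M*(real n*(real n+1)) * Im \<tau>)
     / norm (1 - ee (of_int (int n) * \<tau>) * ee (z - u))"
    using norm_gt[of M \<epsilon> \<tau> z "int n" u] by simp
  also have "\<dots> \<le> exp (- real n) / (1/2)"
    by (rule frac_le) (use ex d in auto)
  finally show "norm (gt M \<epsilon> \<tau> z (int n) u) \<le> 2 * exp (- real n)" by simp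
qed

lemma bound_neg:
  assumes t: "Im \<tau> > 0" and M: "M \<ge> 1/2" and Y: "\<bar>Im u\<bar> \<le> Y" "\<bar>Im z - Im u\<bar> \<le> Y"
    and n: "real n * Im \<tau> \<ge> 2*Y + 1"
  shows "norm (gt M \<epsilon> \<tau> z (- int n - 1) u) \<le> 2 * exp (- real n)"
    and "1 - ee (of_int (- int n - 1) * \<tau>) * ee (z - u) \<noteq> 0"
proof -
  have Y0: "Y \<ge> 0" using Y by linarith
  have "exp 1 \<le> exp (-2*pi*((- real n - 1) * Im \<tau> + Im z - Im u))"
  proof -
    have "(real n + 1) * Im \<tau> - Im z + Im u \<ge> 1" using n Y t by (simp add: algebra_simps)
    then have "2*pi*((real n + 1) * Im \<tau> - Im z + Im u) \<ge> 2*pi*1" by (intro mult_left_mono) auto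
    moreover have "2*pi \<ge> (1::real)" using pi_gt3 by linarith
    ultimately have "2*pi*((real n + 1) * Im \<tau> - Im z + Im u) \<ge> 1" by linarith
    then show ?thesis by (simp add: algebra_simps)
  qed
  also have "\<dots> = norm (ee (of_int (- int n - 1) * \<tau>) * ee (z - u))"
    using norm_w[of "- int n - 1"] by simp
  finally have "norm (ee (of_int (- int n - 1) * \<tau>) * ee (z - u)) \<ge> 2"
    using exp_ge_add_one_self[of 1] by simp
  then have d: "norm (1 - ee (of_int (- int n - 1) * \<tau>) * ee (z - u)) \<ge> 1"
    using norm_triangle_ineq2[of "ee (of_int (- int n - 1) * \<tau>) * ee (z - u)" 1] by (simp add: norm_minus_commute)
  then show "1 - ee (of_int (- int n - 1) * \<tau>) * ee (z - u) \<noteq> 0" by auto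
  define A where "A = 2*pi*M*(real n + 1)"
  have A0: "A \<ge> real n + 1"
  proof -
    have "3 * (1/2) \<le> pi * M" by (rule mult_mono) (use M pi_gt3 in auto)
    then have "2*pi*M \<ge> 1" by linarith
    then show ?thesis unfolding A_def using mult_right_mono[of 1 "2*pi*M" "real n + 1"] by simp
  qed
  have "4*pi*M*(- real n - 1) * Im u + (-2*pi*M*((- real n - 1)*(- real n - 1 + 1)) * Im \<tau>) = A * (- 2 * Im u - real n * Im \<tau>)"
    by (simp add: A_def algebra_simps)
  also have "\<dots> \<le> A * (-1)"
  proof (rule mult_left_mono)
    show "- 2 * Im u - real n * Im \<tau> \<le> -1" using Y n t by (simp add: algebra_simps)
    show "A \<ge> 0" using A0 by linarith
  qed
  also have "\<dots> \<le> - real n" using A0 by simp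
  finally have ex: "exp (4*pi*M*(- real n - 1) * Im u) * exp (-2*pi*M*((- real n - 1)*(- real n - 1 + 1)) * Im \<tau>) \<le> exp (- real n)"
    by (simp add: exp_add[symmetric])
  have "norm (gt M \<epsilon> \<tau> z (- int n - 1) u) = exp (4*pi*M*(- real n - 1) * Im u) * exp (-2*pi*M*((- real n - 1)*(- real n - 1 + 1)) * Im \<tau>)
     / norm (1 - ee (of_int (- int n - 1) * \<tau>) * ee (z - u))"
    using norm_gt[of M \<epsilon> \<tau> z "- int n - 1" u] by simp
  also have "\<dots> \<le> exp (- real n) / 1"
    by (rule frac_le) (use ex d in auto)
  finally show "norm (gt M \<epsilon> \<tau> z (- int n - 1) u) \<le> 2 * exp (- real n)"
    using exp_gt_zero[of "- real n"] by linarith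
qed

lemma fd_exp_comp: "f field_differentiable (at x) \<Longrightarrow> (\<lambda>u. exp (f u)) field_differentiable (at x)"
  using field_differentiable_compose[of f x exp] field_differentiable_within_exp[of "f x" UNIV] by (simp add: o_def)

lemma gt_differentiable:
  assumes "1 - ee (of_int n * \<tau>) * ee (z - x) \<noteq> 0"
  shows "(\<lambda>u. gt M \<epsilon> \<tau> z n u) field_differentiable (at x)"
  using assms unfolding gt_def ee_def
  by (intro derivative_intros fd_exp_comp) auto

lemma ball_bound:
  assumes t: "Im \<tau> > 0" and M: "M \<ge> 1/2"
  shows "\<exists>N\<ge>1. \<forall>n\<ge>N. \<forall>u\<in>ball x 1.
     norm (gt M \<epsilon> \<tau> z (int n) u) \<le> 2 * exp (- real n) \<and> norm (gt M \<epsilon> \<tau> z (- int n - 1) u) \<le> 2 * exp (- real n)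
     \<and> 1 - ee (of_int (int n) * \<tau>) * ee (z - u) \<noteq> 0 \<and> 1 - ee (of_int (- int n - 1) * \<tau>) * ee (z - u) \<noteq> 0"
proof -
  define Y where "Y = \<bar>Im z\<bar> + \<bar>Im x\<bar> + 1"
  define N where "N = max 1 (nat \<lceil>(2*Y+1) / Im \<tau>\<rceil>)"
  have "\<forall>n\<ge>N. \<forall>u\<in>ball x 1.
     norm (gt M \<epsilon> \<tau> z (int n) u) \<le> 2 * exp (- real n) \<and> norm (gt M \<epsilon> \<tau> z (- int n - 1) u) \<le> 2 * exp (- real n)
     \<and> 1 - ee (of_int (int n) * \<tau>) * ee (z - u) \<noteq> 0 \<and> 1 - ee (of_int (- int n - 1) * \<tau>) * ee (z - u) \<noteq> 0"
  proof (intro allI impI ballI)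
    fix n u assume n: "N \<le> n" and u: "u \<in> ball x 1"
    have "real n \<ge> (2*Y+1) / Im \<tau>"
    proof -
      have "(2*Y+1) / Im \<tau> \<le> real (nat \<lceil>(2*Y+1) / Im \<tau>\<rceil>)" by linarith
      also have "\<dots> \<le> real n" using n unfolding N_def by simp
      finally show ?thesis .
    qed
    then have nt: "real n * Im \<tau> \<ge> 2*Y+1" using t by (simp add: pos_divide_le_eq)
    have "\<bar>Im x - Im u\<bar> \<le> 1"
      using u abs_Im_le_cmod[of "x - u"] by (simp add: dist_norm)
    then have Y1: "\<bar>Im u\<bar> \<le> Y" "\<bar>Im z - Im u\<bar> \<le> Y" unfolding Y_def by linarith+
    show "norm (gt M \<epsilon> \<tau> z (int n) u) \<le> 2 * exp (- real n) \<and> norm (gt M \<epsilon> \<tau> z (- int n - 1) u) \<le> 2 * exp (- real n)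
     \<and> 1 - ee (of_int (int n) * \<tau>) * ee (z - u) \<noteq> 0 \<and> 1 - ee (of_int (- int n - 1) * \<tau>) * ee (z - u) \<noteq> 0"
      using bound_pos[OF t M Y1 nt] bound_neg[OF t M Y1 nt] by blast
  qed
  moreover have "N \<ge> 1" unfolding N_def by simp
  ultimately show ?thesis by blast
qed

lemma summable_exp2: "summable (\<lambda>n. c * exp (- real n))"
proof -
  have "exp (- real n) = exp (-1) ^ n" for n
    using exp_of_nat_mult[of n "-1::real"] by simp
  moreover have "summable (\<lambda>n. exp (-1::real) ^ n)" by (rule summable_geometric) simp
  ultimately show ?thesis by (simp add: summable_mult)
qed

lemma has_sum_int_split:
  fixes f :: "int \<Rightarrow> complex"
  assumes s1: "summable (\<lambda>n. norm (f (int n)))" and s2: "summable (\<lambda>n. norm (f (- int n - 1)))"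
  shows "(f has_sum (\<Sum>n. f (int n) + f (- int n - 1))) UNIV"
proof -
  have h1: "((\<lambda>n. f (int n)) has_sum (\<Sum>n. f (int n))) UNIV"
    by (rule norm_summable_imp_has_sum[OF s1]) (rule summable_sums[OF summable_norm_cancel[OF s1]])
  have h2: "((\<lambda>n. f (- int n - 1)) has_sum (\<Sum>n. f (- int n - 1))) UNIV"
    by (rule norm_summable_imp_has_sum[OF s2]) (rule summable_sums[OF summable_norm_cancel[OF s2]])
  have i1: "inj (int)" by (simp add: inj_on_def)
  have i2: "inj (\<lambda>n::nat. - int n - 1)" by (simp add: inj_on_def)
  have g1: "(f has_sum (\<Sum>n. f (int n))) (range int)"
    using has_sum_reindex[OF i1, of f] h1 by (simp add: o_def)
  have g2: "(f has_sum (\<Sum>n. f (- int n - 1))) (range (\<lambda>n::nat. - int n - 1))"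
    using has_sum_reindex[OF i2, of f] h2 by (simp add: o_def)
  have disj: "range int \<inter> range (\<lambda>n::nat. - int n - 1) = {}" by auto
  have un: "range int \<union> range (\<lambda>n::nat. - int n - 1) = UNIV"
  proof (intro set_eqI iffI)
    fix i :: int
    show "i \<in> range int \<union> range (\<lambda>n::nat. - int n - 1)"
    proof (cases "i \<ge> 0")
      case True then have "i = int (nat i)" by simp
      then show ?thesis by blast
    next
      case False then have "i = - int (nat (- i - 1)) - 1" by simp
      then show ?thesis by blast
    qed
  qed simp
  have "(f has_sum ((\<Sum>n. f (int n)) + (\<Sum>n. f (- int n - 1)))) UNIV"
    using has_sum_Un_disjoint[OF g1 g2 disj] un by simp
  moreover have "(\<Sum>n. f (int n)) + (\<Sum>n. f (- int n - 1)) = (\<Sum>n. f (int n) + f (- int n - 1))"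
    by (rule suminf_add[OF summable_norm_cancel[OF s1] summable_norm_cancel[OF s2]])
  ultimately show ?thesis by simp
qed

definition GG :: "real \<Rightarrow> int \<Rightarrow> complex \<Rightarrow> complex \<Rightarrow> nat \<Rightarrow> complex \<Rightarrow> complex" where
  "GG M \<epsilon> \<tau> z n u = gt M \<epsilon> \<tau> z (int n) u + gt M \<epsilon> \<tau> z (- int n - 1) u"

lemma F_series:
  assumes t: "Im \<tau> > 0" and M: "M \<ge> 1/2"
  shows "F M \<epsilon> \<tau> z u = ee (of_real M * (z - u)) * (\<Sum>n. GG M \<epsilon> \<tau> z n u)"
    and "summable (\<lambda>n. GG M \<epsilon> \<tau> z n u)"
proof -
  obtain N where N: "\<forall>n\<ge>N. \<forall>v\<in>ball u 1.
     norm (gt M \<epsilon> \<tau> z (int n) v) \<le> 2 * exp (- real n) \<and> norm (gt M \<epsilon> \<tau> z (- int n - 1) v) \<le> 2 * exp (- real n)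
     \<and> 1 - ee (of_int (int n) * \<tau>) * ee (z - v) \<noteq> 0 \<and> 1 - ee (of_int (- int n - 1) * \<tau>) * ee (z - v) \<noteq> 0"
    using ball_bound[OF t M, where x=u and z=z and \<epsilon>=\<epsilon>] by blast
  have uu: "u \<in> ball u 1" by simp
  have Nu: "norm (gt M \<epsilon> \<tau> z (int n) u) \<le> 2 * exp (- real n) \<and> norm (gt M \<epsilon> \<tau> z (- int n - 1) u) \<le> 2 * exp (- real n)"
    if "n \<ge> N" for n using N uu that by blast
  have s1: "summable (\<lambda>n. norm (gt M \<epsilon> \<tau> z (int n) u))"
    by (rule summable_comparison_test_ev[OF _ summable_exp2[of 2]])
       (unfold eventually_sequentially, rule exI[of _ N], use Nu in simp)
  have s2: "summable (\<lambda>n. norm (gt M \<epsilon> \<tau> z (- int n - 1) u))"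
    by (rule summable_comparison_test_ev[OF _ summable_exp2[of 2]])
       (unfold eventually_sequentially, rule exI[of _ N], use Nu in simp)
  have "(\<Sum>\<^sub>\<infinity>n. gt M \<epsilon> \<tau> z n u) = (\<Sum>n. GG M \<epsilon> \<tau> z n u)"
    using has_sum_int_split[OF s1 s2] unfolding GG_def by (rule infsumI)
  then show "F M \<epsilon> \<tau> z u = ee (of_real M * (z - u)) * (\<Sum>n. GG M \<epsilon> \<tau> z n u)"
    by (simp add: F_gt)
  show "summable (\<lambda>n. GG M \<epsilon> \<tau> z n u)" unfolding GG_def
    by (rule summable_add[OF summable_norm_cancel[OF s1] summable_norm_cancel[OF s2]])
qed

lemma local_rep:
  assumes t: "Im \<tau> > 0" and M: "M \<ge> 1/2"
  shows "\<exists>N\<ge>1. \<exists>T. (\<forall>y\<in>ball x 1. T field_differentiable (at y)) \<and>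
     (\<forall>y\<in>ball x 1. F M \<epsilon> \<tau> z y = ee (of_real M * (z - y)) * (T y + (\<Sum>n<N. GG M \<epsilon> \<tau> z n y)))"
proof -
  obtain N where N1: "N \<ge> 1" and N: "\<forall>n\<ge>N. \<forall>v\<in>ball x 1.
     norm (gt M \<epsilon> \<tau> z (int n) v) \<le> 2 * exp (- real n) \<and> norm (gt M \<epsilon> \<tau> z (- int n - 1) v) \<le> 2 * exp (- real n)
     \<and> 1 - ee (of_int (int n) * \<tau>) * ee (z - v) \<noteq> 0 \<and> 1 - ee (of_int (- int n - 1) * \<tau>) * ee (z - v) \<noteq> 0"
    using ball_bound[OF t M, where x=x and z=z and \<epsilon>=\<epsilon>] by blast
  define f where "f n y = GG M \<epsilon> \<tau> z (n + N) y" for n y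
  have fd: "(f n has_field_derivative deriv (f n) y) (at y)" if y: "y \<in> ball x 1" for n y
  proof -
    have NN: "1 - ee (of_int (int (n + N)) * \<tau>) * ee (z - y) \<noteq> 0" "1 - ee (of_int (- int (n + N) - 1) * \<tau>) * ee (z - y) \<noteq> 0"
      using N[rule_format, of "n + N" y] y by simp_all
    have "f n field_differentiable (at y)"
      unfolding f_def GG_def
      by (intro field_differentiable_add gt_differentiable NN)
    then show ?thesis by (simp add: DERIV_deriv_iff_field_differentiable)
  qed
  have bd: "\<forall>\<^sub>F n in sequentially. \<forall>y\<in>ball x 1. norm (f n y) \<le> 4 * exp (- real n)"
  proof (intro always_eventually allI ballI)
    fix n y assume y: "y \<in> ball x 1"
    have "norm (f n y) \<le> norm (gt M \<epsilon> \<tau> z (int (n + N)) y) + norm (gt M \<epsilon> \<tau> z (- int (n + N) - 1) y)"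
      unfolding f_def GG_def by (rule norm_triangle_ineq)
    also have "\<dots> \<le> 2 * exp (- real (n + N)) + 2 * exp (- real (n + N))"
      using N[rule_format, of "n + N" y] y by (intro add_mono) simp_all
    also have "\<dots> \<le> 4 * exp (- real n)" by simp
    finally show "norm (f n y) \<le> 4 * exp (- real n)" .
  qed
  obtain T T' where TT: "\<forall>y\<in>ball x 1. ((\<lambda>n. f n y) sums T y) \<and> ((\<lambda>n. deriv (f n) y) sums T' y) \<and> (T has_field_derivative T' y) (at y)"
    using series_and_derivative_comparison[OF open_ball summable_exp2[of 4] fd bd] by blast
  have "\<forall>y\<in>ball x 1. T field_differentiable (at y)"
    using TT field_differentiable_def by blast
  moreover have "\<forall>y\<in>ball x 1. F M \<epsilon> \<tau> z y = ee (of_real M * (z - y)) * (T y + (\<Sum>n<N. GG M \<epsilon> \<tau> z n y))"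
  proof
    fix y assume y: "y \<in> ball x 1"
    have "(\<Sum>n. GG M \<epsilon> \<tau> z n y) = (\<Sum>n. GG M \<epsilon> \<tau> z (n + N) y) + (\<Sum>n<N. GG M \<epsilon> \<tau> z n y)"
      by (rule suminf_split_initial_segment[OF F_series(2)[OF t M]])
    also have "(\<Sum>n. GG M \<epsilon> \<tau> z (n + N) y) = T y"
      using TT y unfolding f_def by (auto simp: sums_iff)
    finally show "F M \<epsilon> \<tau> z y = ee (of_real M * (z - y)) * (T y + (\<Sum>n<N. GG M \<epsilon> \<tau> z n y))"
      using F_series(1)[OF t M] by simp
  qed
  ultimately show ?thesis using N1 by blast
qed


lemma den_nz_notin:
  assumes "x \<notin> lattice_coset \<tau> z"
  shows "1 - ee (of_int n * \<tau>) * ee (z - x) \<noteq> 0"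
  using assms unfolding den_zero_iff lattice_coset_def by blast

lemma den_nz_z:
  assumes t: "Im \<tau> > 0" and n: "n \<noteq> 0"
  shows "1 - ee (of_int n * \<tau>) * ee (z - z) \<noteq> 0"
proof
  assume "1 - ee (of_int n * \<tau>) * ee (z - z) = 0"
  then obtain b :: int where "z = z + of_int n * \<tau> + of_int b" unfolding den_zero_iff by blast
  then have "of_int n * \<tau> + of_int b = (0::complex)" by (metis add.assoc add_cancel_left_right)
  then have "Im (of_int n * \<tau> + of_int b) = 0" by simp
  then have "of_int n * Im \<tau> = 0" by simp
  then show False using t n by simp
qed

lemma ee_lin_diff: "(\<lambda>u. ee (c * (z - u))) field_differentiable (at x)"
  unfolding ee_def by (intro derivative_intros fd_exp_comp)

lemma F_holo:
  assumes t: "Im \<tau> > 0" and M: "M \<ge> 1/2"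
  shows "F M \<epsilon> \<tau> z holomorphic_on (- lattice_coset \<tau> z)"
  unfolding holomorphic_on_def
proof
  fix x assume x: "x \<in> - lattice_coset \<tau> z"
  obtain N T where T: "\<forall>y\<in>ball x 1. T field_differentiable (at y)"
    and rep: "\<forall>y\<in>ball x 1. F M \<epsilon> \<tau> z y = ee (of_real M * (z - y)) * (T y + (\<Sum>n<N. GG M \<epsilon> \<tau> z n y))"
    using local_rep[OF t M, where x=x and z=z and \<epsilon>=\<epsilon>] by blast
  have xL: "x \<notin> lattice_coset \<tau> z" using x by simp
  define H where "H y = ee (of_real M * (z - y)) * (T y + (\<Sum>n<N. GG M \<epsilon> \<tau> z n y))" for y
  have "(\<lambda>y. ee (of_real M * (z - y)) * (T y + (\<Sum>n<N. GG M \<epsilon> \<tau> z n y))) field_differentiable (at x)"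
    unfolding GG_def
    by (intro field_differentiable_mult ee_lin_diff field_differentiable_add field_differentiable_sum
        gt_differentiable den_nz_notin[OF xL] T[rule_format]) simp
  then have "H field_differentiable (at x within UNIV)"
    unfolding H_def[abs_def] by simp
  moreover have "H x' = F M \<epsilon> \<tau> z x'" if "dist x' x < 1" for x'
    using rep that by (simp add: H_def dist_commute)
  ultimately have "F M \<epsilon> \<tau> z field_differentiable (at x within UNIV)"
    using field_differentiable_transform_within[of 1 x UNIV H "F M \<epsilon> \<tau> z"] by simp
  then show "F M \<epsilon> \<tau> z field_differentiable (at x within - lattice_coset \<tau> z)"
    using field_differentiable_at_within by auto
qed


lemma gt_zero: "gt M \<epsilon> \<tau> z 0 y = 1 / (1 - ee (z - y))"
  by (simp add: gt_def ee_def)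

lemma F_res:
  assumes t: "Im \<tau> > 0" and M: "M \<ge> 1/2"
  shows "((\<lambda>u. (u - z) * F M \<epsilon> \<tau> z u) \<longlongrightarrow> 1 / (2 * of_real pi * \<i>)) (at z)"
proof -
  obtain N T where N1: "N \<ge> 1" and T: "\<forall>y\<in>ball z 1. T field_differentiable (at y)"
    and rep: "\<forall>y\<in>ball z 1. F M \<epsilon> \<tau> z y = ee (of_real M * (z - y)) * (T y + (\<Sum>n<N. GG M \<epsilon> \<tau> z n y))"
    using local_rep[OF t M, where x=z and z=z and \<epsilon>=\<epsilon>] by blast
  define R where "R y = T y + (\<Sum>n<N. if n = 0 then gt M \<epsilon> \<tau> z (-1) y else GG M \<epsilon> \<tau> z n y)" for y
  have split: "(y - z) * F M \<epsilon> \<tau> z y = ee (of_real M * (z - y)) * ((y - z) * gt M \<epsilon> \<tau> z 0 y + (y - z) * R y)"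
    if y: "y \<in> ball z 1" for y
  proof -
    have eq: "GG M \<epsilon> \<tau> z n y = (if n = 0 then gt M \<epsilon> \<tau> z 0 y else 0) + (if n = 0 then gt M \<epsilon> \<tau> z (-1) y else GG M \<epsilon> \<tau> z n y)" for n
      by (simp add: GG_def)
    have "(\<Sum>n<N. GG M \<epsilon> \<tau> z n y) = (\<Sum>n<N. (if n = 0 then gt M \<epsilon> \<tau> z 0 y else 0) + (if n = 0 then gt M \<epsilon> \<tau> z (-1) y else GG M \<epsilon> \<tau> z n y))"
      by (rule sum.cong[OF refl]) (rule eq)
    also have "\<dots> = (\<Sum>n<N. (if n = 0 then gt M \<epsilon> \<tau> z 0 y else 0)) + (\<Sum>n<N. if n = 0 then gt M \<epsilon> \<tau> z (-1) y else GG M \<epsilon> \<tau> z n y)"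
      by (rule sum.distrib)
    also have "(\<Sum>n<N. (if n = 0 then gt M \<epsilon> \<tau> z 0 y else 0)) = gt M \<epsilon> \<tau> z 0 y"
      using N1 by (simp add: sum.delta)
    finally have S: "(\<Sum>n<N. GG M \<epsilon> \<tau> z n y) = gt M \<epsilon> \<tau> z 0 y + (\<Sum>n<N. if n = 0 then gt M \<epsilon> \<tau> z (-1) y else GG M \<epsilon> \<tau> z n y)" .
    have Fy: "F M \<epsilon> \<tau> z y = ee (of_real M * (z - y)) * (T y + (\<Sum>n<N. GG M \<epsilon> \<tau> z n y))"
      using rep y by blast
    show ?thesis unfolding Fy S R_def by (simp add: algebra_simps)
  qed
  have L1: "((\<lambda>y. ee (of_real M * (z - y))) \<longlongrightarrow> 1) (at z)"
  proof -
    have "isCont (\<lambda>y. ee (of_real M * (z - y))) z"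
      using field_differentiable_imp_continuous_at[OF ee_lin_diff] by blast
    then show ?thesis by (simp add: isCont_def ee_def)
  qed
  have hd: "((\<lambda>y. 1 - ee (z - y)) has_field_derivative 2 * of_real pi * \<i>) (at z)"
    unfolding ee_def by (auto intro!: derivative_eq_intros)
  have h0: "1 - ee (z - z) = 0" by (simp add: ee_def)
  have A: "((\<lambda>y. ((1 - ee (z - y)) - (1 - ee (z - z))) / (y - z)) \<longlongrightarrow> 2 * of_real pi * \<i>) (at z)"
    using hd unfolding has_field_derivative_iff .
  then have A': "((\<lambda>y. (1 - ee (z - y)) / (y - z)) \<longlongrightarrow> 2 * of_real pi * \<i>) (at z)"
    unfolding h0 diff_zero .
  have B: "((\<lambda>y. inverse ((1 - ee (z - y)) / (y - z))) \<longlongrightarrow> inverse (2 * of_real pi * \<i>)) (at z)"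
    by (rule tendsto_inverse[OF A']) simp
  have eqf: "(\<lambda>y. inverse ((1 - ee (z - y)) / (y - z))) = (\<lambda>y. (y - z) * gt M \<epsilon> \<tau> z 0 y)"
    by (rule ext) (simp add: gt_zero inverse_divide)
  have L2: "((\<lambda>y. (y - z) * gt M \<epsilon> \<tau> z 0 y) \<longlongrightarrow> 1 / (2 * of_real pi * \<i>)) (at z)"
    using B unfolding eqf unfolding inverse_eq_divide .
  have Rd: "R field_differentiable (at z)"
  proof -
    have "(\<lambda>y. if n = 0 then gt M \<epsilon> \<tau> z (-1) y else GG M \<epsilon> \<tau> z n y) field_differentiable (at z)" for n
    proof (cases "n = 0")
      case True
      then show ?thesis using gt_differentiable[OF den_nz_z[OF t, of "-1"]] by simp
    next
      case False
      have "GG M \<epsilon> \<tau> z n field_differentiable (at z)"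
        unfolding GG_def[abs_def]
        by (intro field_differentiable_add gt_differentiable den_nz_z[OF t]) (use False in simp_all)
      then show ?thesis using False by simp
    qed
    then show ?thesis unfolding R_def[abs_def]
      by (intro field_differentiable_add field_differentiable_sum) (use T in simp_all)
  qed
  have L3: "((\<lambda>y. (y - z) * R y) \<longlongrightarrow> 0 * R z) (at z)"
  proof (intro tendsto_mult)
    show "((\<lambda>y. y - z) \<longlongrightarrow> 0) (at z)" by (intro tendsto_eq_intros) auto
    show "(R \<longlongrightarrow> R z) (at z)" using field_differentiable_imp_continuous_at[OF Rd] by (simp add: isCont_def)
  qed
  have "((\<lambda>y. ee (of_real M * (z - y)) * ((y - z) * gt M \<epsilon> \<tau> z 0 y + (y - z) * R y)) \<longlongrightarrow> 1 * (1 / (2 * of_real pi * \<i>) + 0 * R z)) (at z)"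
    by (intro tendsto_mult tendsto_add L1 L2 L3)
  then have lim: "((\<lambda>y. ee (of_real M * (z - y)) * ((y - z) * gt M \<epsilon> \<tau> z 0 y + (y - z) * R y)) \<longlongrightarrow> 1 / (2 * of_real pi * \<i>)) (at z)"
    by simp
  have ev: "\<forall>\<^sub>F y in at z. ee (of_real M * (z - y)) * ((y - z) * gt M \<epsilon> \<tau> z 0 y + (y - z) * R y) = (y - z) * F M \<epsilon> \<tau> z y"
    unfolding eventually_at by (rule exI[of _ 1]) (auto simp: split dist_commute)
  show ?thesis by (rule Lim_transform_eventually[OF lim ev])
qed


lemma F_pole:
  assumes t: "Im \<tau> > 0" and M: "M \<ge> 1/2" and Mdef: "M = real m / 2"
  shows "at_most_simple_pole (F M \<epsilon> \<tau> z) (z + of_int a * \<tau> + of_int b)"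
proof -
  define c where "c u = (-1) powi (int m * b + a * \<epsilon>) * exp (- 2 * of_real pi * \<i> * of_real M * (of_int a ^ 2 * \<tau> + 2 * of_int a * u))" for u
  define k where "k = - (of_int a * \<tau> + of_int b)"
  have cc: "(c \<longlongrightarrow> c z) (at z)"
  proof -
    have "isCont c z" unfolding c_def by (intro continuous_intros)
    then show ?thesis by (simp add: isCont_def)
  qed
  have lim0: "((\<lambda>u. c u * ((u - z) * F M \<epsilon> \<tau> z u)) \<longlongrightarrow> c z * (1 / (2 * of_real pi * \<i>))) (at z)"
    by (intro tendsto_mult cc F_res[OF t M])
  have lim1: "((\<lambda>x. c (x + k) * ((x + k - z) * F M \<epsilon> \<tau> z (x + k))) \<longlongrightarrow> c z * (1 / (2 * of_real pi * \<i>))) (at (z - k))"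
    using LIM_offset[OF lim0, of k] by simp
  have eq: "c (x + k) * ((x + k - z) * F M \<epsilon> \<tau> z (x + k)) = (x - (z + of_int a * \<tau> + of_int b)) * F M \<epsilon> \<tau> z x" for x
  proof -
    have x: "x = (x + k) + of_int a * \<tau> + of_int b" by (simp add: k_def)
    have "F M \<epsilon> \<tau> z x = c (x + k) * F M \<epsilon> \<tau> z (x + k)"
      by (subst x) (simp add: F_quasi[OF Mdef] c_def)
    then show ?thesis by (simp add: k_def algebra_simps)
  qed
  have zk: "z - k = z + of_int a * \<tau> + of_int b" by (simp add: k_def)
  have L: "((\<lambda>x. (x - (z + of_int a * \<tau> + of_int b)) * F M \<epsilon> \<tau> z x) \<longlongrightarrow> c z * (1 / (2 * of_real pi * \<i>))) (at (z + of_int a * \<tau> + of_int b))"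
    using lim1 unfolding eq zk .
  show ?thesis unfolding at_most_simple_pole_def by (rule exI, rule L)
qed

theorem lemma3p1:
  fixes m :: nat and M :: real and \<epsilon> :: int and \<tau> z :: complex
  assumes "m > 0" and "M = real m / 2"
    and "\<epsilon> \<in> {0, 1}"
    and "Im \<tau> > 0"
  shows "(\<forall>l k :: int. \<forall>u. u \<notin> lattice_coset \<tau> z \<longrightarrow>
            F M \<epsilon> \<tau> z (u + of_int l * \<tau> + of_int k) =
              (-1) powi (int m * k + l * \<epsilon>)
              * exp (- 2 * of_real pi * \<i> * of_real M * (of_int l ^ 2 * \<tau> + 2 * of_int l * u))
              * F M \<epsilon> \<tau> z u)
       \<and> F M \<epsilon> \<tau> z holomorphic_on (- lattice_coset \<tau> z)
       \<and> (\<forall>w \<in> lattice_coset \<tau> z. at_most_simple_pole (F M \<epsilon> \<tau> z) w)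
       \<and> simple_pole_residue (F M \<epsilon> \<tau> z) z (1 / (2 * of_real pi * \<i>))"
proof -
  have M: "M \<ge> 1/2" using assms(1,2) by simp
  note t = assms(4)
  have P1: "\<forall>l k :: int. \<forall>u. u \<notin> lattice_coset \<tau> z \<longrightarrow>
            F M \<epsilon> \<tau> z (u + of_int l * \<tau> + of_int k) =
              (-1) powi (int m * k + l * \<epsilon>)
              * exp (- 2 * of_real pi * \<i> * of_real M * (of_int l ^ 2 * \<tau> + 2 * of_int l * u))
              * F M \<epsilon> \<tau> z u"
    using F_quasi[OF assms(2)] by blast
  have P3: "\<forall>w \<in> lattice_coset \<tau> z. at_most_simple_pole (F M \<epsilon> \<tau> z) w"
    unfolding lattice_coset_def using F_pole[OF t M assms(2)] by blast
  have P4: "simple_pole_residue (F M \<epsilon> \<tau> z) z (1 / (2 * of_real pi * \<i>))"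
    unfolding simple_pole_residue_def by (rule F_res[OF t M])
  show ?thesis using P1 F_holo[OF t M] P3 P4 by blast
qed

end
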